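(* Suppose $C=\{C_i\}_{i\in[n]}$ and $C'=\{C'_i\}_{i\in[n]}$ are normalized spectrahedral representations (by $k\times k$ matrices) of $K_C$ and $K_{C'}$ respectively. Then $\mathrm{hdist}(K_C,K_{C'})\le n^{3/2}\cdot\mathrm{mdist}(C,C')$.
   Context: For real symmetric $k\times k$ matrices $C=\{C_i\}_{i\in[n]}$, $K_C=\{x\in\mathbb{R}^n:\sum_iC_ix_i\succeq0\}$. The representation is normalized if $\sum_iC_i=\mathrm{Id}_k$ and each $C_i\succeq0$. $\mathrm{mdist}(C,C')=\max_i\|C_i-C'_i\|$ (operator norm). $\mathrm{hdist}(K,K')=\max(\sup_{x\in\mathcal{B}\cap K}d(x,K'),\sup_{y\in\mathcal{B}\cap K'}d(y,K))$, with $\mathcal{B}$ the Euclidean unit ball of $\mathbb{R}^n$ and $d$ the Euclidean distance. *)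

theory Defs
  imports "HOL-Analysis.Analysis"
begin

text \<open>Real k x k matrices are rendered as real^'k^'k; the index set [n] as a finite type 'n.\<close>

definition sym_mat :: "real^'k^'k \<Rightarrow> bool" where
  "sym_mat A \<longleftrightarrow> transpose A = A"

definition psd :: "real^'k^'k \<Rightarrow> bool" where
  "psd A \<longleftrightarrow> (\<forall>x. 0 \<le> x \<bullet> (A *v x))"

definition opnorm :: "real^'k^'k \<Rightarrow> real" where
  "opnorm A = onorm (\<lambda>x. A *v x)"

definition spectrahedron :: "('n::finite \<Rightarrow> real^'k^'k) \<Rightarrow> (real^'n) set" where
  "spectrahedron C = {x. psd (\<Sum>i\<in>UNIV. x $ i *\<^sub>R C i)}"

definition normalized_rep :: "('n::finite \<Rightarrow> real^'k^'k) \<Rightarrow> bool" where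
  "normalized_rep C \<longleftrightarrow> (\<forall>i. sym_mat (C i) \<and> psd (C i)) \<and> (\<Sum>i\<in>UNIV. C i) = mat 1"

definition mdist :: "('n::finite \<Rightarrow> real^'k^'k) \<Rightarrow> ('n \<Rightarrow> real^'k^'k) \<Rightarrow> real" where
  "mdist C C' = Max (range (\<lambda>i. opnorm (C i - C' i)))"

definition hdist :: "(real^'n) set \<Rightarrow> (real^'n) set \<Rightarrow> real" where
  "hdist K K' = max (SUP x\<in>cball 0 1 \<inter> K. infdist x K') (SUP y\<in>cball 0 1 \<inter> K'. infdist y K)"

end

theory Submission
  imports Defs
begin

lemma sum_mvec: "finite S \<Longrightarrow> (sum f S) *v (v::real^'k) = (\<Sum>i\<in>S. f i *v v)"
  by (induction S rule: finite_induct) (auto simp: matrix_vector_mult_add_rdistrib)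

definition qf :: "real^'k^'k \<Rightarrow> real^'k \<Rightarrow> real" where
  "qf A v = v \<bullet> (A *v v)"

lemma qf_sum: "qf (\<Sum>i\<in>(UNIV::'n::finite set). f i) v = (\<Sum>i\<in>UNIV. qf (f i) v)"
  by (simp add: qf_def sum_mvec inner_sum_right)

lemma qf_add: "qf (A + B) v = qf A v + qf B v"
  by (simp add: qf_def matrix_vector_mult_add_rdistrib inner_add_right)

lemma qf_diff: "qf (A - B) v = qf A v - qf B v"
  by (simp add: qf_def matrix_vector_mult_diff_rdistrib inner_diff_right)

lemma qf_scale: "qf (c *\<^sub>R A) v = c * qf A v"
  by (simp add: qf_def scaleR_matrix_vector_assoc[symmetric])

lemma qf_one: "qf (mat 1) v = (norm v)^2"
  by (simp add: qf_def power2_norm_eq_inner)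

lemma qf_bound: "\<bar>qf A v\<bar> \<le> opnorm A * (norm v)^2"
proof -
  have "\<bar>qf A v\<bar> \<le> norm v * norm (A *v v)"
    unfolding qf_def by (rule Cauchy_Schwarz_ineq2)
  also have "\<dots> \<le> norm v * (opnorm A * norm v)"
    unfolding opnorm_def
    by (intro mult_left_mono onorm) auto
  finally show ?thesis by (simp add: power2_eq_square mult_ac)
qed

lemma opnorm_nonneg: "0 \<le> opnorm A"
  unfolding opnorm_def by (intro onorm_pos_le) auto

lemma opnorm_swap: "opnorm (A - B) = opnorm (B - A)"
proof -
  have "(\<lambda>x. (B - A) *v x) = (\<lambda>x. - ((A - B) *v x))"
    by (auto simp: matrix_vector_mult_diff_rdistrib)
  then show ?thesis unfolding opnorm_def
    by (simp add: onorm_neg)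
qed

lemma norm_const_vec: "norm ((\<chi> i. t) :: real^'n::finite) = sqrt (real CARD('n)) * \<bar>t\<bar>"
  by (simp add: norm_vec_def L2_set_def real_sqrt_mult)

lemma one_dir:
  fixes C C' :: "'n::finite \<Rightarrow> real^'k^'k"
  assumes one: "(\<Sum>i\<in>UNIV. C' i) = mat 1" and d: "\<forall>i. opnorm (C i - C' i) \<le> d"
    and x: "x \<in> spectrahedron C" and nx: "norm x \<le> 1"
  shows "infdist x (spectrahedron C') \<le> real CARD('n) powr (3/2) * d"
proof -
  define n where "n = real CARD('n)"
  have d0: "0 \<le> d" using d opnorm_nonneg order_trans by blast
  have n1: "1 \<le> n" unfolding n_def by simp
  define t where "t = n * d"
  define y where "y = x + (\<chi> i. t)"
  have "y \<in> spectrahedron C'"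
    unfolding spectrahedron_def psd_def mem_Collect_eq
  proof
    fix v :: "real^'k"
    have px: "0 \<le> qf (\<Sum>i\<in>UNIV. x $ i *\<^sub>R C i) v"
      using x unfolding spectrahedron_def psd_def qf_def by auto
    have "qf (\<Sum>i\<in>UNIV. y $ i *\<^sub>R C' i) v = (\<Sum>i\<in>UNIV. y$i * qf (C' i) v)"
      by (simp add: qf_sum qf_scale)
    also have "\<dots> = (\<Sum>i\<in>UNIV. x$i * qf (C i) v) - (\<Sum>i\<in>UNIV. x$i * qf (C i - C' i) v)
        + t * (\<Sum>i\<in>UNIV. qf (C' i) v)"
      by (simp add: y_def qf_diff algebra_simps sum.distrib sum_subtractf sum_distrib_left)
    also have "(\<Sum>i\<in>UNIV. qf (C' i) v) = (norm v)^2"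
      using qf_sum[of C' v] one qf_one[of v] by metis
    also have "(\<Sum>i\<in>UNIV. x$i * qf (C i) v) = qf (\<Sum>i\<in>UNIV. x $ i *\<^sub>R C i) v"
      by (simp add: qf_sum qf_scale)
    finally have eq: "qf (\<Sum>i\<in>UNIV. y $ i *\<^sub>R C' i) v =
       qf (\<Sum>i\<in>UNIV. x $ i *\<^sub>R C i) v - (\<Sum>i\<in>UNIV. x$i * qf (C i - C' i) v) + t * (norm v)^2" .
    have "(\<Sum>i\<in>UNIV. x$i * qf (C i - C' i) v) \<le> (\<Sum>i\<in>(UNIV::'n set). d * (norm v)^2)"
    proof (rule sum_mono)
      fix i
      have "x$i * qf (C i - C' i) v \<le> \<bar>x$i\<bar> * \<bar>qf (C i - C' i) v\<bar>"
        by (metis abs_ge_self abs_mult)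
      also have "\<dots> \<le> 1 * (d * (norm v)^2)"
      proof (rule mult_mono)
        show "\<bar>x$i\<bar> \<le> 1" using component_le_norm_cart[of x i] nx by simp
        show "\<bar>qf (C i - C' i) v\<bar> \<le> d * (norm v)^2"
          using qf_bound[of "C i - C' i" v] d
          by (meson mult_right_mono order_trans zero_le_power2)
      qed auto
      finally show "x$i * qf (C i - C' i) v \<le> d * (norm v)^2" by simp
    qed
    also have "\<dots> = t * (norm v)^2" by (simp add: t_def n_def)
    finally show "0 \<le> v \<bullet> ((\<Sum>i\<in>UNIV. y $ i *\<^sub>R C' i) *v v)"
      using eq px unfolding qf_def by linarith
  qed
  then have "infdist x (spectrahedron C') \<le> dist x y" by (rule infdist_le)
  also have "dist x y = sqrt n * t"
    using d0 n1 by (simp add: y_def dist_norm norm_const_vec n_def t_def)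
  also have "\<dots> = n powr (3/2) * d"
  proof -
    have "n powr (3/2) = n powr 1 * n powr (1/2)"
      by (subst powr_add[symmetric]) simp
    then show ?thesis using n1 by (simp add: t_def powr_half_sqrt)
  qed
  finally show ?thesis by (simp add: n_def)
qed

theorem lemma13:
  fixes C C' :: "'n::finite \<Rightarrow> real^'k^'k"
  assumes "normalized_rep C" and "normalized_rep C'"
  shows "hdist (spectrahedron C) (spectrahedron C') \<le> real CARD('n) powr (3/2) * mdist C C'"
proof -
  define d where "d = mdist C C'"
  have dle: "opnorm (C i - C' i) \<le> d" for i
    unfolding d_def mdist_def by (rule Max_ge) auto
  have one: "(\<Sum>i\<in>UNIV. C i) = mat 1" "(\<Sum>i\<in>UNIV. C' i) = mat 1"
    using assms unfolding normalized_rep_def by auto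
  have z: "(0::real^'n) \<in> spectrahedron D" for D :: "'n \<Rightarrow> real^'k^'k"
    by (simp add: spectrahedron_def psd_def)
  have A: "(SUP x\<in>cball 0 1 \<inter> spectrahedron C. infdist x (spectrahedron C'))
      \<le> real CARD('n) powr (3/2) * d"
  proof (rule cSUP_least)
    show "cball 0 1 \<inter> spectrahedron C \<noteq> {}" using z by force
  next
    fix x assume "x \<in> cball 0 1 \<inter> spectrahedron C"
    then show "infdist x (spectrahedron C') \<le> real CARD('n) powr (3/2) * d"
      by (intro one_dir) (use one dle in auto)
  qed
  have B: "(SUP x\<in>cball 0 1 \<inter> spectrahedron C'. infdist x (spectrahedron C))
      \<le> real CARD('n) powr (3/2) * d"
  proof (rule cSUP_least)
    show "cball 0 1 \<inter> spectrahedron C' \<noteq> {}" using z by force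
  next
    fix x assume "x \<in> cball 0 1 \<inter> spectrahedron C'"
    then show "infdist x (spectrahedron C) \<le> real CARD('n) powr (3/2) * d"
      proof (intro one_dir[where C=C' and C'=C])
        show "\<forall>i. opnorm (C' i - C i) \<le> d" using dle opnorm_swap by metis
      qed (use one in auto)
  qed
  show ?thesis using A B unfolding hdist_def d_def by simp
qed

end
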